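(* Let $\mathbf R\subset\mathbb R^2$ be a bounded region of area $1$, and let $\mathbf u$ be a point of $\partial\mathbf R$ such that $\mathbf R$ lies on one side of some line through $\mathbf u$. For a point $O$ of $\mathbf R$, let $\mathcal P_O$ be the probability that the triangle $\triangle ABC$ contains $O$, where $A,B,C$ are independent and uniformly distributed in $\mathbf R$. Then $\lim_{O\to\mathbf u}\mathcal P_O=0$. *)

theory Defs
  imports "HOL-Analysis.Analysis" "HOL-Probability.Probability"
begin

definition unif :: "(real^2) set \<Rightarrow> (real^2) measure" where
  "unif R = uniform_measure lebesgue R"

definition triangle_prob :: "(real^2) set \<Rightarrow> real^2 \<Rightarrow> real" where
  "triangle_prob R p =
     measure (unif R \<Otimes>\<^sub>M (unif R \<Otimes>\<^sub>M unif R))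
       {(a, b, c). p \<in> convex hull {a, b, c}}"

end

theory Submission
  imports Defs
begin

lemma hull_vertex:
  fixes n a b c p :: "real^2"
  assumes "p \<in> convex hull {a, b, c}"
  shows "n \<bullet> a \<ge> n \<bullet> p \<or> n \<bullet> b \<ge> n \<bullet> p \<or> n \<bullet> c \<ge> n \<bullet> p"
proof (rule ccontr)
  assume "\<not> ?thesis"
  then have "{a,b,c} \<subseteq> {x. n \<bullet> x < n \<bullet> p}" by auto
  then have "convex hull {a,b,c} \<subseteq> {x. n \<bullet> x < n \<bullet> p}"
    by (intro hull_minimal convex_halfspace_lt)
  with assms show False by auto
qed

lemma unif_prob:
  fixes R :: "(real^2) set"
  assumes "R \<in> sets lebesgue" "bounded R" "measure lebesgue R = 1"
  shows "prob_space (unif R)" and "emeasure lebesgue R = 1"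
proof -
  have "R \<in> lmeasurable" using assms by (simp add: bounded_set_imp_lmeasurable)
  then show e: "emeasure lebesgue R = 1"
    using assms(3) by (simp add: emeasure_eq_measure2)
  show "prob_space (unif R)" unfolding unif_def
    by (rule prob_space_uniform_measure) (simp_all add: e)
qed

lemma triangle_bound:
  fixes R :: "(real^2) set" and S :: "(real^2) set"
  assumes R: "R \<in> sets lebesgue" "bounded R" "measure lebesgue R = 1"
    and S: "S \<in> sets lebesgue"
    and sub: "\<And>a b c. p \<in> convex hull {a, b, c} \<Longrightarrow> a \<in> S \<or> b \<in> S \<or> c \<in> S"
  shows "triangle_prob R p \<le> 3 * measure (unif R) S"
proof -
  define U where "U = unif R"
  have pU: "prob_space U" using unif_prob[OF R] by (simp add: U_def)
  have sU: "sets U = sets lebesgue" by (simp add: U_def unif_def)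
  have spU: "space U = UNIV" using sets_eq_imp_space_eq[OF sU] by simp
  have pUU: "prob_space (U \<Otimes>\<^sub>M U)" using pU by (intro prob_space_pair)
  define P where "P = U \<Otimes>\<^sub>M (U \<Otimes>\<^sub>M U)"
  have pP: "prob_space P" unfolding P_def using pU pUU by (intro prob_space_pair)
  have SU: "S \<in> sets U" using S sU by simp
  have sfU: "sigma_finite_measure U" using pU by (simp add: prob_space_imp_sigma_finite)
  have sfUU: "sigma_finite_measure (U \<Otimes>\<^sub>M U)" using pUU by (simp add: prob_space_imp_sigma_finite)
  have UNIVU: "UNIV \<in> sets U" using spU by (metis sets.top)
  have UNIVUU: "UNIV \<in> sets (U \<Otimes>\<^sub>M U)" using spU by (metis sets.top space_pair_measure UNIV_Times_UNIV)
  have e1U: "emeasure U UNIV = 1" using pU spU by (metis prob_space.emeasure_space_1)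
  have e1UU: "emeasure (U \<Otimes>\<^sub>M U) UNIV = 1" using pUU spU
    by (metis prob_space.emeasure_space_1 space_pair_measure UNIV_Times_UNIV)
  define A1 where "A1 = S \<times> (UNIV :: ((real^2) \<times> (real^2)) set)"
  define A2 where "A2 = (UNIV :: (real^2) set) \<times> (S \<times> (UNIV :: (real^2) set))"
  define A3 where "A3 = (UNIV :: (real^2) set) \<times> ((UNIV :: (real^2) set) \<times> S)"
  have SUU1: "S \<times> UNIV \<in> sets (U \<Otimes>\<^sub>M U)" using SU UNIVU by simp
  have SUU2: "UNIV \<times> S \<in> sets (U \<Otimes>\<^sub>M U)" using SU UNIVU by simp
  have A1s: "A1 \<in> sets P" unfolding A1_def P_def using SU UNIVUU by simp
  have A2s: "A2 \<in> sets P" unfolding A2_def P_def using SUU1 UNIVU by simp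
  have A3s: "A3 \<in> sets P" unfolding A3_def P_def using SUU2 UNIVU by simp
  have eA1: "emeasure P A1 = emeasure U S"
    unfolding A1_def P_def
    using sigma_finite_measure.emeasure_pair_measure_Times[OF sfUU SU UNIVUU] e1UU by simp
  have eA2: "emeasure P A2 = emeasure U S"
    unfolding A2_def P_def
    using sigma_finite_measure.emeasure_pair_measure_Times[OF sfUU UNIVU SUU1] e1U
      sigma_finite_measure.emeasure_pair_measure_Times[OF sfU SU UNIVU] by simp
  have eA3: "emeasure P A3 = emeasure U S"
    unfolding A3_def P_def
    using sigma_finite_measure.emeasure_pair_measure_Times[OF sfUU UNIVU SUU2] e1U
      sigma_finite_measure.emeasure_pair_measure_Times[OF sfU UNIVU SU] by simp
  have mA: "measure P A1 = measure U S" "measure P A2 = measure U S" "measure P A3 = measure U S"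
    using eA1 eA2 eA3 by (simp_all add: measure_def)
  define E where "E = {(a, b, c). p \<in> convex hull {a, b, c}}"
  have EA: "E \<subseteq> A1 \<union> A2 \<union> A3" unfolding E_def A1_def A2_def A3_def using sub by auto
  have tp: "triangle_prob R p = measure P E" unfolding triangle_prob_def P_def U_def E_def by simp
  have "measure P E \<le> measure P (A1 \<union> A2 \<union> A3)"
  proof (cases "E \<in> sets P")
    case True
    then show ?thesis using EA A1s A2s A3s pP
      by (intro finite_measure.finite_measure_mono) (auto simp: prob_space_def)
  next
    case False
    then show ?thesis by (simp add: measure_notin_sets)
  qed
  also have "\<dots> \<le> measure P A1 + measure P A2 + measure P A3"
    using A1s A2s A3s measure_Un_le[of "A1 \<union> A2" P A3] measure_Un_le[of A1 P A2]
    by auto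
  finally show ?thesis using tp mA by (simp add: U_def)
qed

lemma closed_leb: "closed (S::(real^2) set) \<Longrightarrow> S \<in> sets lebesgue"
  by (metis borel_closed sets_completionI_sets sets_lborel)

theorem corollary3p2:
  fixes R :: "(real^2) set" and u :: "real^2"
  assumes "R \<in> sets lebesgue"
    and "bounded R"
    and "measure lebesgue R = 1"
    and "u \<in> frontier R"
    and "\<exists>n::real^2. n \<noteq> 0 \<and> (\<forall>x\<in>R. n \<bullet> (x - u) \<le> 0)"
  shows "(triangle_prob R \<longlongrightarrow> 0) (at u within R)"
proof -
  obtain n :: "real^2" where n0: "n \<noteq> 0" and nR: "\<forall>x\<in>R. n \<bullet> (x - u) \<le> 0"
    using assms(5) by blast
  define H where "H t = {x. - t \<le> n \<bullet> (x - u)}" for t :: real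
  have Hc: "closed (H t)" for t
  proof -
    have "H t = {x. n \<bullet> u - t \<le> n \<bullet> x}" by (auto simp: H_def inner_diff_right)
    then show ?thesis by (simp add: closed_halfspace_ge)
  qed
  have Hs: "H t \<in> sets lebesgue" for t using Hc closed_leb by blast
  have eR: "emeasure lebesgue R = 1" using unif_prob[OF assms(1-3)] by simp
  define A where "A k = R \<inter> H (1 / real (Suc k))" for k
  have As: "range A \<subseteq> sets lebesgue" using Hs assms(1) by (auto simp: A_def)
  have Ad: "decseq A"
  proof (rule decseq_SucI)
    fix k
    have "1 / real (Suc (Suc k)) \<le> 1 / real (Suc k)" by (simp add: frac_le)
    then show "A (Suc k) \<subseteq> A k" by (auto simp: A_def H_def)
  qed
  have Af: "emeasure lebesgue (A k) \<noteq> \<infinity>" for k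
  proof -
    have "emeasure lebesgue (A k) \<le> emeasure lebesgue R"
      using As assms(1) by (intro emeasure_mono) (auto simp: A_def)
    then show ?thesis using eR by (auto simp: top_unique)
  qed
  have lim: "(\<lambda>k. measure lebesgue (A k)) \<longlonglongrightarrow> measure lebesgue (\<Inter>k. A k)"
    by (rule Lim_measure_decseq[OF As Ad Af])
  have "(\<Inter>k. A k) \<subseteq> {x. n \<bullet> x = n \<bullet> u}"
  proof
    fix x assume x: "x \<in> (\<Inter>k. A k)"
    then have xR: "x \<in> R" by (auto simp: A_def)
    have "- (1 / real (Suc k)) \<le> n \<bullet> (x - u)" for k using x by (auto simp: A_def H_def)
    then have ge: "0 \<le> n \<bullet> (x - u)"
    proof -
      assume h: "\<And>k. - (1 / real (Suc k)) \<le> n \<bullet> (x - u)"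
      show ?thesis
      proof (rule ccontr)
        assume "\<not> 0 \<le> n \<bullet> (x - u)"
        then have pos: "0 < - (n \<bullet> (x - u))" by simp
        obtain k where "1 / real (Suc k) < - (n \<bullet> (x - u))"
          using reals_Archimedean[OF pos] by (auto simp: inverse_eq_divide)
        with h[of k] show False by simp
      qed
    qed
    moreover have "n \<bullet> (x - u) \<le> 0" using nR xR by blast
    ultimately have "n \<bullet> (x - u) = 0" by linarith
    then show "x \<in> {x. n \<bullet> x = n \<bullet> u}" by (simp add: inner_diff_right)
  qed
  moreover have "negligible {x. n \<bullet> x = n \<bullet> u}" using n0 by (intro negligible_hyperplane) simp
  ultimately have "(\<Inter>k. A k) \<in> null_sets lebesgue"
    using negligible_subset negligible_iff_null_sets by blast
  then have "measure lebesgue (\<Inter>k. A k) = 0" by (simp add: measure_eq_0_null_sets)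
  with lim have lim0: "(\<lambda>k. measure lebesgue (A k)) \<longlonglongrightarrow> 0" by simp
  have mU: "measure (unif R) (H t) = measure lebesgue (R \<inter> H t)" for t
    unfolding unif_def using eR Hs assms(3) by (subst measure_uniform_measure) auto
  show ?thesis
    unfolding Lim_within
  proof (intro allI impI)
    fix e :: real assume e: "0 < e"
    then have "e / 3 > 0" by simp
    from LIMSEQ_D[OF lim0 this] obtain k where k: "norm (measure lebesgue (A k) - 0) < e / 3"
      by auto
    define t where "t = 1 / real (Suc k)"
    have t0: "t > 0" by (simp add: t_def)
    have nn: "norm n > 0" using n0 by simp
    show "\<exists>d>0. \<forall>x\<in>R. 0 < dist x u \<and> dist x u < d \<longrightarrow> dist (triangle_prob R x) 0 < e"
    proof (intro exI[of _ "t / norm n"] conjI ballI impI)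
      show "t / norm n > 0" using t0 nn by simp
      fix x assume "x \<in> R" and dx: "0 < dist x u \<and> dist x u < t / norm n"
      have "\<bar>n \<bullet> (x - u)\<bar> \<le> norm n * norm (x - u)" by (rule Cauchy_Schwarz_ineq2)
      also have "\<dots> < norm n * (t / norm n)"
        using dx nn by (intro mult_strict_left_mono) (auto simp: dist_norm)
      also have "\<dots> = t" using nn by simp
      finally have xt: "- t \<le> n \<bullet> (x - u)" by simp
      have sub: "a \<in> H t \<or> b \<in> H t \<or> c \<in> H t" if "x \<in> convex hull {a, b, c}" for a b c
        using hull_vertex[OF that, of n] xt by (auto simp: H_def inner_diff_right)
      have "triangle_prob R x \<le> 3 * measure (unif R) (H t)"
        by (rule triangle_bound[OF assms(1-3) Hs sub])
      also have "\<dots> = 3 * measure lebesgue (A k)" by (simp add: mU A_def t_def)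
      also have "\<dots> < e" using k by simp
      finally have lt: "triangle_prob R x < e" .
      have "triangle_prob R x \<ge> 0" by (simp add: triangle_prob_def)
      with lt show "dist (triangle_prob R x) 0 < e" by simp
    qed
  qed
qed

end
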